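(* Let $S,T\subseteq\mathbb{Z}_{>0}$ be finite. Then $|T\triangleleft S|=|S|$ if and only if $T\preceq S$.
   Context: For a finite set $S\subseteq\mathbb{Z}_{>0}$, $S(i)$ denotes its $i$th smallest element. $T\preceq S$ means $|T|\ge|S|$ and $T(i)<S(i)$ for all $i\in[|S|]$. For finite $S,T$, $T\triangleleft S$ is computed by going through $S$ from largest to smallest; each $s$ picks the largest element of $T$ less than $s$ not yet picked (if one exists); $T\triangleleft S$ is the set of picked elements. *)

theory Defs
  imports Main
begin

definition nth_elem :: "nat set \<Rightarrow> nat \<Rightarrow> nat" where
  "nth_elem S i = sorted_list_of_set S ! (i - 1)"

definition dominated :: "nat set \<Rightarrow> nat set \<Rightarrow> bool" where
  "dominated T S \<longleftrightarrow> card T \<ge> card S \<and> (\<forall>i\<in>{1..card S}. nth_elem T i < nth_elem S i)"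

fun pick :: "nat list \<Rightarrow> nat set \<Rightarrow> nat set" where
  "pick [] A = {}"
| "pick (s # ss) A =
     (if \<exists>t\<in>A. t < s
      then (let t = Max {t\<in>A. t < s} in insert t (pick ss (A - {t})))
      else pick ss A)"

definition tri :: "nat set \<Rightarrow> nat set \<Rightarrow> nat set" where
  "tri T S = pick (rev (sorted_list_of_set S)) T"

end

theory Submission
  imports Defs
begin

lemma cntA:
  assumes fin: "finite T" and k1: "1 \<le> k"
  shows "k \<le> card {t\<in>T. t<v} \<longleftrightarrow> k \<le> card T \<and> nth_elem T k < v"
proof -
  define xs where "xs = sorted_list_of_set T"
  have so: "sorted xs" and di: "distinct xs" and st: "set xs = T" and le: "length xs = card T"
    using fin by (auto simp: xs_def)
  have ne: "nth_elem T k = xs ! (k-1)" by (simp add: nth_elem_def xs_def)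
  show ?thesis
  proof
    assume a: "k \<le> card {t\<in>T. t<v}"
    have f2: "finite {t\<in>T. t<v}" using fin by auto
    have kT: "k \<le> card T" using a card_mono[OF fin, of "{t\<in>T. t<v}"] by auto
    moreover have "xs ! (k-1) < v"
    proof (rule ccontr)
      assume "\<not> xs ! (k-1) < v"
      hence g: "v \<le> xs ! (k-1)" by simp
      have "{t\<in>T. t<v} \<subseteq> (\<lambda>i. xs!i) ` {..<k-1}"
      proof
        fix t assume "t \<in> {t\<in>T. t<v}"
        hence tT: "t \<in> set xs" and tv: "t < v" using st by auto
        then obtain i where i: "i < length xs" "xs ! i = t" by (auto simp: in_set_conv_nth)
        have "i < k - 1"
        proof (rule ccontr)
          assume "\<not> i < k-1"
          hence "xs!(k-1) \<le> xs!i" using sorted_nth_mono[OF so, of "k-1" i] i by auto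
          thus False using g tv i by auto
        qed
        thus "t \<in> (\<lambda>i. xs!i) ` {..<k-1}" using i by auto
      qed
      hence "card {t\<in>T. t<v} \<le> card ((\<lambda>i. xs!i) ` {..<k-1})" by (intro card_mono) auto
      also have "\<dots> \<le> k - 1" using card_image_le[of "{..<k-1}" "\<lambda>i. xs!i"] by auto
      finally show False using a k1 by auto
    qed
    ultimately show "k \<le> card T \<and> nth_elem T k < v" using ne by auto
  next
    assume a: "k \<le> card T \<and> nth_elem T k < v"
    have sub: "(\<lambda>i. xs!i) ` {..<k} \<subseteq> {t\<in>T. t<v}"
    proof
      fix t assume "t \<in> (\<lambda>i. xs!i) ` {..<k}"
      then obtain i where i: "i < k" "t = xs!i" by auto
      have "xs!i \<le> xs!(k-1)" using sorted_nth_mono[OF so, of i "k-1"] i a le by auto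
      moreover have "xs!i \<in> T" using i a le st by auto
      ultimately show "t \<in> {t\<in>T. t<v}" using a ne i by auto
    qed
    have inj: "inj_on (\<lambda>i. xs!i) {..<k}"
      using di a le by (auto simp: inj_on_def nth_eq_iff_index_eq)
    have "k = card ((\<lambda>i. xs!i) ` {..<k})" using card_image[OF inj] by simp
    also have "\<dots> \<le> card {t\<in>T. t<v}" using sub fin by (intro card_mono) auto
    finally show "k \<le> card {t\<in>T. t<v}" .
  qed
qed

lemma pick_props: "finite A \<Longrightarrow> pick ss A \<subseteq> A \<and> card (pick ss A) \<le> length ss"
proof (induction ss arbitrary: A)
  case Nil then show ?case by simp
next
  case (Cons s ss)
  show ?case
  proof (cases "\<exists>t\<in>A. t < s")
    case True
    define t where "t = Max {t\<in>A. t < s}"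
    have tA: "t \<in> A" using True Cons.prems unfolding t_def
      using Max_in[of "{t\<in>A. t < s}"] by auto
    have IH: "pick ss (A - {t}) \<subseteq> A - {t} \<and> card (pick ss (A - {t})) \<le> length ss"
      using Cons.IH[of "A - {t}"] Cons.prems by auto
    have eq: "pick (s#ss) A = insert t (pick ss (A - {t}))" using True by (simp add: Let_def t_def)
    have "finite (pick ss (A - {t}))" using IH Cons.prems finite_subset by blast
    then show ?thesis unfolding eq using IH tA by (auto simp: card_insert_if)
  next
    case False then show ?thesis using Cons.IH[of A] Cons.prems by (simp add: le_SucI)
  qed
qed

definition hall :: "nat set \<Rightarrow> nat set \<Rightarrow> bool" where
  "hall S T \<longleftrightarrow> (\<forall>s\<in>S. card {x\<in>S. x \<le> s} \<le> card {t\<in>T. t < s})"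

lemma cnt_mono: "finite (T::nat set) \<Longrightarrow> a \<le> b \<Longrightarrow> card {t\<in>T. t < a} \<le> card {t\<in>T. t < b}"
  by (intro card_mono) auto

lemma main_list:
  "sorted_wrt (>) ss \<Longrightarrow> finite T \<Longrightarrow> card (pick ss T) = length ss \<longleftrightarrow> hall (set ss) T"
proof (induction ss arbitrary: T)
  case Nil then show ?case by (simp add: hall_def)
next
  case (Cons s ss)
  define S' where "S' = set ss"
  have lt: "\<forall>x\<in>S'. x < s" using Cons.prems S'_def by auto
  have fS: "finite S'" using S'_def by simp
  have cS': "card S' = length ss" using Cons.prems S'_def
  proof -
    have "distinct ss" using Cons.prems(1) by (induction ss) auto
    thus ?thesis using S'_def distinct_card by blast
  qed
  have sS: "set (s#ss) = insert s S'" using S'_def by simp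
  have cntS_x: "{x\<in>insert s S'. x \<le> y} = {x\<in>S'. x \<le> y}" if "y \<in> S'" for y
    using lt that by auto
  have cntS_s: "card {x\<in>insert s S'. x \<le> s} = Suc (card S')"
  proof -
    have "{x\<in>insert s S'. x \<le> s} = insert s S'" using lt by auto
    thus ?thesis using lt fS by auto
  qed
  have cntS'_all: "card {x\<in>S'. x \<le> y} \<le> card S'" for y using fS by (intro card_mono) auto
  show ?case
  proof (cases "\<exists>t\<in>T. t < s")
    case False
    have "card (pick (s#ss) T) \<le> length ss" using False pick_props[OF Cons.prems(2), of ss] by simp
    moreover have "\<not> hall (set (s#ss)) T"
    proof -
      have "{t\<in>T. t < s} = {}" using False by auto
      hence "card {t\<in>T. t < s} = 0" by (metis card.empty)
      hence "\<not> card {x\<in>insert s S'. x \<le> s} \<le> card {t\<in>T. t < s}" using cntS_s by linarith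
      thus ?thesis unfolding hall_def sS by blast
    qed
    ultimately show ?thesis by auto
  next
    case True
    define t0 where "t0 = Max {t\<in>T. t < s}"
    have fT: "finite T" using Cons.prems by simp
    have "t0 \<in> {t\<in>T. t < s}" using True fT unfolding t0_def
      by (intro Max_in) auto
    hence t0: "t0 \<in> T" "t0 < s" by auto
    have t0max: "t \<le> t0" if "t \<in> T" "t < s" for t
      unfolding t0_def using fT that by (intro Max_ge) auto
    define T' where "T' = T - {t0}"
    have fT': "finite T'" using fT T'_def by simp
    have eq: "pick (s#ss) T = insert t0 (pick ss T')" using True by (simp add: Let_def t0_def T'_def)
    have pp: "pick ss T' \<subseteq> T'" using pick_props[OF fT'] by auto
    have fp: "finite (pick ss T')" using pp fT' finite_subset by blast
    have t0n: "t0 \<notin> pick ss T'" using pp T'_def by auto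
    have c1: "card (pick (s#ss) T) = Suc (card (pick ss T'))" unfolding eq using fp t0n by simp
    have IH: "card (pick ss T') = length ss \<longleftrightarrow> hall S' T'"
      using Cons.IH[OF _ fT'] Cons.prems S'_def by auto
    have cT'_le: "card {t\<in>T'. t < y} \<le> card {t\<in>T. t < y}" for y
      using fT T'_def by (intro card_mono) auto
    have cT_s: "card {t\<in>T. t < s} = Suc (card {t\<in>T'. t < s})"
    proof -
      have "{t\<in>T. t < s} = insert t0 {t\<in>T'. t < s}" using t0 T'_def by auto
      thus ?thesis using fT' T'_def by simp
    qed
    have "hall S' T' \<longleftrightarrow> hall (insert s S') T"
    proof
      assume h: "hall S' T'"
      show "hall (insert s S') T" unfolding hall_def
      proof
        fix y assume y: "y \<in> insert s S'"
        show "card {x\<in>insert s S'. x \<le> y} \<le> card {t\<in>T. t < y}"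
        proof (cases "y = s")
          case True
          have "card S' \<le> card {t\<in>T'. t < s}"
          proof (cases "S' = {}")
            case True thus ?thesis by simp
          next
            case False
            define m where "m = Max S'"
            have m: "m \<in> S'" using False fS m_def by auto
            have "{x\<in>S'. x \<le> m} = S'" using fS m_def by auto
            hence "card S' \<le> card {t\<in>T'. t < m}" using h m unfolding hall_def by metis
            also have "\<dots> \<le> card {t\<in>T'. t < s}" using lt m fT' by (intro cnt_mono) auto
            finally show ?thesis .
          qed
          thus ?thesis using True cntS_s cT_s by simp
        next
          case False
          hence yS: "y \<in> S'" using y by auto
          have "card {x\<in>S'. x \<le> y} \<le> card {t\<in>T'. t < y}" using h yS unfolding hall_def by blast
          thus ?thesis using cntS_x[OF yS] cT'_le[of y] by simp
        qed
      qed
    next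
      assume h: "hall (insert s S') T"
      have hs: "Suc (card S') \<le> card {t\<in>T. t < s}" using h cntS_s unfolding hall_def by (metis insertI1)
      show "hall S' T'" unfolding hall_def
      proof
        fix y assume yS: "y \<in> S'"
        have hy: "card {x\<in>S'. x \<le> y} \<le> card {t\<in>T. t < y}" using h yS cntS_x[OF yS] unfolding hall_def by auto
        show "card {x\<in>S'. x \<le> y} \<le> card {t\<in>T'. t < y}"
        proof (cases "t0 < y")
          case True
          have "{t\<in>T. t < y} = {t\<in>T. t < s}" using t0max True lt yS by fastforce
          hence "{t\<in>T'. t < y} = {t\<in>T'. t < s}" using T'_def by auto
          hence "card S' \<le> card {t\<in>T'. t < y}" using hs cT_s by simp
          thus ?thesis using cntS'_all[of y] by simp
        next
          case False
          hence "{t\<in>T'. t < y} = {t\<in>T. t < y}" using T'_def by auto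
          thus ?thesis using hy by simp
        qed
      qed
    qed
    thus ?thesis using c1 IH cS' sS by simp
  qed
qed

lemma lemB:
  assumes fin: "finite S" and k: "k \<in> {1..card S}"
  shows "card {x\<in>S. x \<le> nth_elem S k} = k"
proof -
  define xs where "xs = sorted_list_of_set S"
  have so: "sorted_wrt (<) xs" and le: "length xs = card S"
    using fin by (auto simp: xs_def)
  have e: "{x\<in>S. x \<le> nth_elem S k} = {x\<in>S. x < Suc (nth_elem S k)}" by auto
  have a: "k \<le> card {x\<in>S. x < Suc (nth_elem S k)}" using cntA[OF fin] k by auto
  have b: "\<not> Suc k \<le> card {x\<in>S. x < Suc (nth_elem S k)}"
  proof
    assume c: "Suc k \<le> card {x\<in>S. x < Suc (nth_elem S k)}"
    hence "Suc k \<le> card S \<and> nth_elem S (Suc k) < Suc (nth_elem S k)" using cntA[OF fin, of "Suc k"] by auto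
    moreover have "Suc k \<le> card S \<Longrightarrow> xs ! (k-1) < xs ! k"
      using sorted_wrt_nth_less[OF so, of "k-1" k] k le by auto
    ultimately show False using k by (auto simp: nth_elem_def xs_def)
  qed
  show ?thesis using a b e by simp
qed

lemma img: "finite S \<Longrightarrow> S = nth_elem S ` {1..card S}"
proof -
  assume fin: "finite S"
  define xs where "xs = sorted_list_of_set S"
  have st: "set xs = S" and le: "length xs = card S" using fin by (auto simp: xs_def)
  show ?thesis
  proof
    show "S \<subseteq> nth_elem S ` {1..card S}"
    proof
      fix s assume "s \<in> S"
      then obtain i where i: "i < length xs" "xs ! i = s" using st by (auto simp: in_set_conv_nth)
      hence "s = nth_elem S (Suc i)" by (simp add: nth_elem_def xs_def)
      thus "s \<in> nth_elem S ` {1..card S}" using i le by force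
    qed
  next
    show "nth_elem S ` {1..card S} \<subseteq> S"
      using st le by (auto simp: nth_elem_def xs_def[symmetric])
  qed
qed

lemma hall_dom: assumes fS: "finite S" and fT: "finite T"
  shows "hall S T \<longleftrightarrow> dominated T S"
proof -
  have "hall S T \<longleftrightarrow> (\<forall>k\<in>{1..card S}. k \<le> card {t\<in>T. t < nth_elem S k})"
  proof -
    have "hall S T \<longleftrightarrow> (\<forall>s\<in>nth_elem S ` {1..card S}. card {x\<in>S. x \<le> s} \<le> card {t\<in>T. t < s})"
      unfolding hall_def using img[OF fS] by simp
    also have "\<dots> \<longleftrightarrow> (\<forall>k\<in>{1..card S}. k \<le> card {t\<in>T. t < nth_elem S k})"
      using lemB[OF fS] by auto
    finally show ?thesis .
  qed
  also have "\<dots> \<longleftrightarrow> (\<forall>k\<in>{1..card S}. k \<le> card T \<and> nth_elem T k < nth_elem S k)"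
    using cntA[OF fT] by auto
  also have "\<dots> \<longleftrightarrow> dominated T S"
    unfolding dominated_def
  proof (cases "card S = 0")
    case False
    thus "(\<forall>k\<in>{1..card S}. k \<le> card T \<and> nth_elem T k < nth_elem S k) \<longleftrightarrow>
      (card S \<le> card T \<and> (\<forall>i\<in>{1..card S}. nth_elem T i < nth_elem S i))"
      by (metis atLeastAtMost_iff le_trans less_one linorder_not_less order_refl)
  qed auto
  finally show ?thesis .
qed

theorem lemma4p7:
  fixes S T :: "nat set"
  assumes "finite S" and "finite T"
    and "\<forall>x\<in>S. 0 < x" and "\<forall>x\<in>T. 0 < x"
  shows "card (tri T S) = card S \<longleftrightarrow> dominated T S"
proof -
  define ss where "ss = rev (sorted_list_of_set S)"
  have so: "sorted_wrt (>) ss" using assms(1) by (simp add: ss_def sorted_wrt_rev)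
  have "card (pick ss T) = length ss \<longleftrightarrow> hall (set ss) T" using main_list[OF so assms(2)] .
  moreover have "set ss = S" "length ss = card S" using assms(1) by (auto simp: ss_def)
  ultimately show ?thesis using hall_dom[OF assms(1,2)] by (simp add: tri_def ss_def)
qed

end
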